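(* For every $x\in\mathcal X$ there exists $\mu_0(x)\ge 0$ such that for all $\mu\ge\mu_0(x)$, $D^\mu(x)=\mathbb 1\{T(x)\ge 1-\alpha\}$ and $C^\mu(x)\in\arg\max_{C\in\mathcal I}p_C(x)$; moreover, if several sets share this maximal value of $p_C(x)$, then $C^\mu(x)$ is one with the largest weight $w(C)$ among them.
   Context: Let $(X,Y)\sim P_{XY}$ on $\mathcal X\times\mathcal Y$, $\alpha\in(0,1)$. $\mathcal I$ is a finite collection of subsets of $\mathcal Y$ enumerated in a fixed lexicographic order, $w:\mathcal I\to(0,B)$ a bounded positive weight. For $C\in\mathcal I$ let $p_C(x)=\mathbb P(Y\in C\mid X=x)$, $\ell_{x,C}(\mu)=w(C)p_C(x)+\mu(p_C(x)-(1-\alpha))$ for $\mu\ge0$, $\mathcal U_x(\mu)=\max_{C\in\mathcal I}\ell_{x,C}(\mu)$. $C^\mu(x)$ is a maximizer of $\ell_{x,C}(\mu)$ over $C\in\mathcal I$, ties broken in favor of the largest $w(C)$ and then smallest index; $D^\mu(x)=\mathbb 1\{\mathcal U_x(\mu)\ge0\}$; $T(x)=\max_{C\in\mathcal I}p_C(x)$. *)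

theory Defs
  imports "HOL-Probability.Probability"
begin

text \<open>The conditional law of Y given X = x is modelled by a Markov kernel
  K :: 'x => 'y measure (each K x a probability measure on Y).
  The finite collection I is a list (its enumeration order = fixed lexicographic order);
  the index of C is its position in the list.\<close>

definition pC :: "('x \<Rightarrow> 'y measure) \<Rightarrow> 'y set \<Rightarrow> 'x \<Rightarrow> real" where
  "pC K C x = measure (K x) C"

definition ell :: "('x \<Rightarrow> 'y measure) \<Rightarrow> ('y set \<Rightarrow> real) \<Rightarrow> real \<Rightarrow> 'x \<Rightarrow> 'y set \<Rightarrow> real \<Rightarrow> real" where
  "ell K w \<alpha> x C \<mu> = w C * pC K C x + \<mu> * (pC K C x - (1 - \<alpha>))"

definition U :: "('x \<Rightarrow> 'y measure) \<Rightarrow> ('y set \<Rightarrow> real) \<Rightarrow> real \<Rightarrow> 'y set list \<Rightarrow> 'x \<Rightarrow> real \<Rightarrow> real" where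
  "U K w \<alpha> I x \<mu> = Max ((\<lambda>C. ell K w \<alpha> x C \<mu>) ` set I)"

definition Cidx :: "('x \<Rightarrow> 'y measure) \<Rightarrow> ('y set \<Rightarrow> real) \<Rightarrow> real \<Rightarrow> 'y set list \<Rightarrow> 'x \<Rightarrow> real \<Rightarrow> nat" where
  "Cidx K w \<alpha> I x \<mu> =
     (LEAST i. i < length I \<and> ell K w \<alpha> x (I ! i) \<mu> = U K w \<alpha> I x \<mu> \<and>
        w (I ! i) = Max {w (I ! j) | j. j < length I \<and> ell K w \<alpha> x (I ! j) \<mu> = U K w \<alpha> I x \<mu>})"

definition Cmu :: "('x \<Rightarrow> 'y measure) \<Rightarrow> ('y set \<Rightarrow> real) \<Rightarrow> real \<Rightarrow> 'y set list \<Rightarrow> 'x \<Rightarrow> real \<Rightarrow> 'y set" where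
  "Cmu K w \<alpha> I x \<mu> = I ! Cidx K w \<alpha> I x \<mu>"

definition Dmu :: "('x \<Rightarrow> 'y measure) \<Rightarrow> ('y set \<Rightarrow> real) \<Rightarrow> real \<Rightarrow> 'y set list \<Rightarrow> 'x \<Rightarrow> real \<Rightarrow> real" where
  "Dmu K w \<alpha> I x \<mu> = (if U K w \<alpha> I x \<mu> \<ge> 0 then 1 else 0)"

definition T :: "('x \<Rightarrow> 'y measure) \<Rightarrow> 'y set list \<Rightarrow> 'x \<Rightarrow> real" where
  "T K I x = Max ((\<lambda>C. pC K C x) ` set I)"

end

theory Submission
  imports Defs
begin

lemma main_x:
  fixes K :: "'x \<Rightarrow> 'y measure" and I :: "'y set list" and w :: "'y set \<Rightarrow> real"
    and \<alpha> B :: real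
  assumes ps: "prob_space (K x)"
    and "I \<noteq> []"
    and a1: "\<alpha> < 1"
    and wB: "\<And>C. C \<in> set I \<Longrightarrow> 0 < w C \<and> w C < B"
  shows "\<exists>\<mu>0 \<ge> 0. \<forall>\<mu> \<ge> \<mu>0.
           Dmu K w \<alpha> I x \<mu> = (if T K I x \<ge> 1 - \<alpha> then 1 else 0) \<and>
           Cmu K w \<alpha> I x \<mu> \<in> set I \<and>
           pC K (Cmu K w \<alpha> I x \<mu>) x = T K I x \<and>
           (\<forall>C\<in>set I. pC K C x = T K I x \<longrightarrow> w C \<le> w (Cmu K w \<alpha> I x \<mu>))"
proof -
  define S where "S = set I"
  define p where "p = (\<lambda>C. pC K C x)"
  define TT where "TT = T K I x"
  have finS: "finite S" and neS: "S \<noteq> {}" using assms by (auto simp: S_def)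
  have p01: "0 \<le> p C \<and> p C \<le> 1" for C
    using prob_space.prob_le_1[OF ps] by (simp add: p_def pC_def)
  have TTdef: "TT = Max (p ` S)" by (simp add: TT_def T_def S_def p_def)
  have pleT: "p C \<le> TT" if "C \<in> S" for C using that finS by (simp add: TTdef)
  obtain Cs where Cs: "Cs \<in> S" "p Cs = TT"
  proof -
    have "TT \<in> p ` S" using Max_in[of "p ` S"] finS neS TTdef by auto
    then show ?thesis using that by auto
  qed
  have Bpos: "B > 0" using wB[of Cs] Cs(1) S_def by fastforce
  have wpB: "w C * p C < B" "0 \<le> w C * p C" if "C \<in> S" for C
  proof -
    have "w C * p C \<le> w C * 1" using p01[of C] wB[of C] that S_def
      by (intro mult_left_mono) auto
    moreover have "w C < B" using wB[of C] that S_def by auto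
    ultimately show "w C * p C < B" by linarith
    show "0 \<le> w C * p C" using p01[of C] wB[of C] that S_def by auto
  qed
  define G where "G = {TT - p C | C. C \<in> S \<and> p C < TT} \<union> {1 - \<alpha> - TT | _::unit. TT < 1 - \<alpha>} \<union> {1}"
  have finG: "finite G" unfolding G_def using finS by auto
  define d where "d = Min G"
  have dpos: "d > 0" unfolding d_def using finG by (auto simp: G_def)
  have dle1: "d \<le> TT - p C" if "C \<in> S" "p C < TT" for C
    unfolding d_def using finG that by (intro Min_le) (auto simp: G_def)
  have dle2: "d \<le> 1 - \<alpha> - TT" if "TT < 1 - \<alpha>"
    unfolding d_def using finG that by (intro Min_le) (auto simp: G_def)
  define \<mu>0 where "\<mu>0 = (B + 1) / d"
  have mu0: "\<mu>0 \<ge> 0" using Bpos dpos by (simp add: \<mu>0_def)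
  have mud: "\<mu> * e \<ge> B + 1" if "\<mu> \<ge> \<mu>0" "e \<ge> d" for \<mu> e
  proof -
    have "B + 1 = \<mu>0 * d" using dpos by (simp add: \<mu>0_def)
    also have "\<dots> \<le> \<mu> * e" using that mu0 dpos by (intro mult_mono) auto
    finally show ?thesis .
  qed
  show ?thesis
  proof (intro exI[of _ \<mu>0] conjI mu0 allI impI)
    fix \<mu> assume hm: "\<mu> \<ge> \<mu>0"
    define e where "e = (\<lambda>C. ell K w \<alpha> x C \<mu>)"
    have edef: "e C = w C * p C + \<mu> * (p C - (1 - \<alpha>))" for C
      by (simp add: e_def ell_def p_def)
    define UU where "UU = U K w \<alpha> I x \<mu>"
    have UUdef: "UU = Max (e ` S)" by (simp add: UU_def U_def e_def S_def)
    have eleU: "e C \<le> UU" if "C \<in> S" for C using that finS by (simp add: UUdef)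
    obtain Cm where Cm: "Cm \<in> S" "e Cm = UU"
    proof -
      have "UU \<in> e ` S" using Max_in[of "e ` S"] finS neS UUdef by auto
      then show ?thesis using that by auto
    qed
    have strict: "e C < e C'" if "C \<in> S" "C' \<in> S" "p C < TT" "p C' = TT" for C C'
    proof -
      have "\<mu> * (TT - p C) \<ge> B + 1" using mud[OF hm dle1[OF that(1,3)]] .
      moreover have "e C' - e C = w C' * p C' - w C * p C + \<mu> * (TT - p C)"
        using that by (simp add: edef algebra_simps)
      ultimately show ?thesis using wpB[OF that(1)] wpB[OF that(2)] by linarith
    qed
    have maxT: "p C = TT" if "C \<in> S" "e C = UU" for C
    proof (rule ccontr)
      assume "p C \<noteq> TT"
      then have "p C < TT" using pleT[OF that(1)] by auto
      then have "e C < e Cs" using strict[OF that(1) Cs(1)] Cs(2) by auto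
      then show False using eleU[OF Cs(1)] that by auto
    qed
    define Q where "Q = (\<lambda>i. i < length I \<and> e (I ! i) = UU \<and>
        w (I ! i) = Max {w (I ! j) | j. j < length I \<and> e (I ! j) = UU})"
    have finW: "finite {w (I ! j) | j. j < length I \<and> e (I ! j) = UU}"
      by (rule finite_subset[of _ "(\<lambda>j. w (I!j)) ` {..<length I}"]) auto
    obtain jm where jm: "jm < length I" "I ! jm = Cm" using Cm(1) S_def by (auto simp: in_set_conv_nth)
    have neW: "{w (I ! j) | j. j < length I \<and> e (I ! j) = UU} \<noteq> {}" using jm Cm by auto
    obtain i0 where "Q i0"
    proof -
      have "Max {w (I ! j) | j. j < length I \<and> e (I ! j) = UU} \<in> {w (I ! j) | j. j < length I \<and> e (I ! j) = UU}"
        using Max_in[OF finW neW] .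
      then obtain j where "j < length I" "e (I ! j) = UU" "w (I!j) = Max {w (I ! j) | j. j < length I \<and> e (I ! j) = UU}"
        by auto
      then show ?thesis using that[of j] by (auto simp: Q_def)
    qed
    then have Qi: "Q (LEAST i. Q i)" by (rule LeastI)
    have Cmu_eq: "Cmu K w \<alpha> I x \<mu> = I ! (LEAST i. Q i)"
      by (simp add: Cmu_def Cidx_def Q_def e_def UU_def)
    define C0 where "C0 = I ! (LEAST i. Q i)"
    have C0S: "C0 \<in> S" and eC0: "e C0 = UU"
      and wC0: "w C0 = Max {w (I ! j) | j. j < length I \<and> e (I ! j) = UU}"
      using Qi by (auto simp: Q_def C0_def S_def)
    have pC0: "p C0 = TT" using maxT[OF C0S eC0] .
    show "Cmu K w \<alpha> I x \<mu> \<in> set I" using C0S by (simp add: Cmu_eq C0_def S_def)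
    show "pC K (Cmu K w \<alpha> I x \<mu>) x = T K I x" using pC0 by (simp add: Cmu_eq C0_def p_def TT_def)
    show "\<forall>C\<in>set I. pC K C x = T K I x \<longrightarrow> w C \<le> w (Cmu K w \<alpha> I x \<mu>)"
    proof (intro ballI impI)
      fix C assume CI: "C \<in> set I" and pCT: "pC K C x = T K I x"
      have CS: "C \<in> S" using CI S_def by simp
      have pc: "p C = TT" using pCT by (simp add: p_def TT_def)
      show "w C \<le> w (Cmu K w \<alpha> I x \<mu>)"
      proof (cases "e C = UU")
        case True
        obtain j where "j < length I" "I ! j = C" using CI by (auto simp: in_set_conv_nth)
        then have "w C \<in> {w (I ! j) | j. j < length I \<and> e (I ! j) = UU}" using True by auto
        then have "w C \<le> w C0" unfolding wC0 using finW by (intro Max_ge) auto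
        then show ?thesis by (simp add: Cmu_eq C0_def)
      next
        case False
        then have "e C < e C0" using eleU[OF CS] eC0 by auto
        then have "w C * TT < w C0 * TT" using pc pC0 by (simp add: edef)
        moreover have "TT \<ge> 0" using p01[of C] pc by simp
        ultimately have "w C < w C0"
          by (metis mult_right_less_imp_less)
        then show ?thesis by (simp add: Cmu_eq C0_def)
      qed
    qed
    have UC0: "UU = w C0 * TT + \<mu> * (TT - (1 - \<alpha>))" using eC0 pC0 by (simp add: edef)
    show "Dmu K w \<alpha> I x \<mu> = (if T K I x \<ge> 1 - \<alpha> then 1 else 0)"
    proof (cases "TT \<ge> 1 - \<alpha>")
      case True
      have "\<mu> \<ge> 0" using hm mu0 by simp
      then have "UU \<ge> 0" using UC0 wpB[OF C0S] pC0 True by simp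
      then show ?thesis using True by (simp add: Dmu_def UU_def TT_def)
    next
      case False
      have "\<mu> * (1 - \<alpha> - TT) \<ge> B + 1" using mud[OF hm dle2] False by simp
      then have "UU < 0" using UC0 wpB[OF C0S] pC0 by (simp add: algebra_simps)
      then show ?thesis using False by (simp add: Dmu_def UU_def TT_def)
    qed
  qed
qed

theorem proposition3:
  fixes K :: "'x \<Rightarrow> 'y measure" and I :: "'y set list" and w :: "'y set \<Rightarrow> real"
    and \<alpha> B :: real
  assumes "\<And>x. prob_space (K x)"
    and "\<And>x C. C \<in> set I \<Longrightarrow> C \<in> sets (K x)"
    and "I \<noteq> []" and "distinct I"
    and "0 < \<alpha>" and "\<alpha> < 1"
    and "\<And>C. C \<in> set I \<Longrightarrow> 0 < w C \<and> w C < B"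
  shows "\<forall>x. \<exists>\<mu>0 \<ge> 0. \<forall>\<mu> \<ge> \<mu>0.
           Dmu K w \<alpha> I x \<mu> = (if T K I x \<ge> 1 - \<alpha> then 1 else 0) \<and>
           Cmu K w \<alpha> I x \<mu> \<in> set I \<and>
           pC K (Cmu K w \<alpha> I x \<mu>) x = T K I x \<and>
           (\<forall>C\<in>set I. pC K C x = T K I x \<longrightarrow> w C \<le> w (Cmu K w \<alpha> I x \<mu>))"
  using main_x[of K _ I \<alpha> w B, OF assms(1) assms(3) assms(6) assms(7)] by blast

end
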